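(* Let $SS=(S(a_i))_{i\ge1}$ be a system of grids without multiple zeroes, let $n\ge1$, $q\ge0$ be integers, and let $\alpha=\sum_{i=1}^n 1/a_i$ be the density of zeroes of an $n$-filling of the first $n$ grids having no zero of multiplicity greater than one; assume $0<\alpha<1$. Then $$msr_n(q)\;<\;\frac{n+q}{1-\alpha}+1,$$ and this majorant is unimprovable.
   Context: A grid $S(a)$ of module $a\in\mathbb N$, $a\ge1$, with shift $k\in\mathbb Z$ is the sequence $(l_j)_{j\in\mathbb Z}$ with $l_j=0$ iff $j\equiv k\pmod a$ and $l_j=1$ otherwise. The product of grids is the elementwise logical AND. An $n$-filling with modules $a_1,\dots,a_n$ is a product of grids $S(a_1),\dots,S(a_n)$ (arbitrary shifts) such that omitting any one grid changes the product. A system of grids is an infinite sequence of grids with nondecreasing modules such that for each $n$ the first $n$ grids form an $n$-filling. A zero of a filling at position $j$ has multiplicity $k$ if exactly $k$ of the generating grids have a zero at $j$. A system is without multiple zeroes if for every $n$ there is an $n$-filling of its first $n$ grids in which every zero has multiplicity $1$. A $q$-series is a segment between positions $i<k$ with $l_i=l_k=1$ and exactly $q$ ones strictly between them; its length is $k-i$. $msr_n(q)$ is the supremum over all $n$-fillings with modules $a_1,\dots,a_n$ (all shifts) of the largest length of a $q$-series. *)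

theory Defs
  imports Complex_Main "HOL-Library.Extended_Real"
begin

text \<open>Grids are indexed from 0: grid number i+1 of the paper is (a i, k i),
  with module a i and shift k i. The value True encodes 1, False encodes 0.\<close>

definition grid_val :: "nat \<Rightarrow> int \<Rightarrow> int \<Rightarrow> bool" where
  "grid_val a k j \<longleftrightarrow> j mod int a \<noteq> k mod int a"

definition prod_val :: "(nat \<Rightarrow> nat) \<Rightarrow> (nat \<Rightarrow> int) \<Rightarrow> nat set \<Rightarrow> int \<Rightarrow> bool" where
  "prod_val a k I j \<longleftrightarrow> (\<forall>i\<in>I. grid_val (a i) (k i) j)"

definition is_filling :: "(nat \<Rightarrow> nat) \<Rightarrow> (nat \<Rightarrow> int) \<Rightarrow> nat \<Rightarrow> bool" where
  "is_filling a k n \<longleftrightarrow> (\<forall>i<n. a i \<ge> 1) \<and>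
     (\<forall>m<n. prod_val a k ({..<n} - {m}) \<noteq> prod_val a k {..<n})"

definition grid_system :: "(nat \<Rightarrow> nat) \<Rightarrow> (nat \<Rightarrow> int) \<Rightarrow> bool" where
  "grid_system a k \<longleftrightarrow> (\<forall>i. a i \<ge> 1) \<and> mono a \<and> (\<forall>n. is_filling a k n)"

definition zero_mult :: "(nat \<Rightarrow> nat) \<Rightarrow> (nat \<Rightarrow> int) \<Rightarrow> nat \<Rightarrow> int \<Rightarrow> nat" where
  "zero_mult a k n j = card {i. i < n \<and> \<not> grid_val (a i) (k i) j}"

definition no_multiple_zeroes :: "(nat \<Rightarrow> nat) \<Rightarrow> bool" where
  "no_multiple_zeroes a \<longleftrightarrow>
     (\<forall>n. \<exists>k'. is_filling a k' n \<and> (\<forall>j. zero_mult a k' n j \<le> 1))"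

definition q_series :: "(int \<Rightarrow> bool) \<Rightarrow> nat \<Rightarrow> int \<Rightarrow> int \<Rightarrow> bool" where
  "q_series l q i k \<longleftrightarrow> i < k \<and> l i \<and> l k \<and> card {j. i < j \<and> j < k \<and> l j} = q"

definition msr :: "(nat \<Rightarrow> nat) \<Rightarrow> nat \<Rightarrow> nat \<Rightarrow> ereal" where
  "msr a n q = (SUP p \<in> {(s, i, k). is_filling a s n \<and> q_series (prod_val a s {..<n}) q i k}.
                  ereal (real_of_int (snd (snd p) - fst (snd p))))"

definition zero_density :: "(nat \<Rightarrow> nat) \<Rightarrow> nat \<Rightarrow> real" where
  "zero_density a n = (\<Sum>i<n. 1 / real (a i))"

end

theory Submission imports Defs begin
lemma count_class:
  fixes a :: nat and r i k :: int
  assumes a: "a \<ge> 1" and ik: "i < k"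
  shows "int a * int (card {j. i < j \<and> j < k \<and> j mod int a = r}) \<le> k - i - 2 + int a"
proof (cases "{j. i < j \<and> j < k \<and> j mod int a = r} = {}")
  case True
  then have "card {j. i < j \<and> j < k \<and> j mod int a = r} = 0" by (simp only: card.empty)
  then show ?thesis using a ik by simp
next
  case False
  define Z where "Z = {j. i < j \<and> j < k \<and> j mod int a = r}"
  have fin: "finite Z" unfolding Z_def by (rule finite_subset[of _ "{i<..<k}"]) auto
  have ne: "Z \<noteq> {}" using False Z_def by simp
  define lo where "lo = Min Z"
  define hi where "hi = Max Z"
  have loZ: "lo \<in> Z" using fin ne lo_def by simp
  have hiZ: "hi \<in> Z" using fin ne hi_def by simp
  have ap: "int a > 0" using a by simp
  have rep: "j = int a * (j div int a) + r" if "j \<in> Z" for j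
  proof -
    have "j mod int a = r" using that Z_def by simp
    then show ?thesis using div_mult_mod_eq[of j "int a"] by (simp add: mult.commute)
  qed
  have inj: "inj_on (\<lambda>j. j div int a) Z"
  proof (rule inj_onI)
    fix x y assume "x \<in> Z" "y \<in> Z" "x div int a = y div int a"
    then show "x = y" using rep[of x] rep[of y] by simp
  qed
  have sub: "(\<lambda>j. j div int a) ` Z \<subseteq> {lo div int a .. hi div int a}"
  proof
    fix y assume "y \<in> (\<lambda>j. j div int a) ` Z"
    then obtain j where j: "j \<in> Z" "y = j div int a" by auto
    have "lo \<le> j" "j \<le> hi" using fin j lo_def hi_def by auto
    then show "y \<in> {lo div int a .. hi div int a}" using j ap by (auto intro: zdiv_mono1)
  qed
  have "card Z = card ((\<lambda>j. j div int a) ` Z)" using card_image[OF inj] by simp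
  also have "\<dots> \<le> card {lo div int a .. hi div int a}" by (rule card_mono) (auto simp: sub)
  finally have c0: "card Z \<le> nat (hi div int a - lo div int a + 1)" by simp
  have "lo \<le> hi" using fin hiZ lo_def by simp
  then have "lo div int a \<le> hi div int a" using ap by (simp add: zdiv_mono1)
  then have c: "int (card Z) \<le> hi div int a - lo div int a + 1" using c0 by linarith
  have e: "int a * (hi div int a - lo div int a) = hi - lo"
    using rep[OF loZ] rep[OF hiZ] by (simp add: algebra_simps)
  have "lo > i" "hi < k" using loZ hiZ Z_def by auto
  have "int a * int (card Z) \<le> int a * (hi div int a - lo div int a + 1)"
    using c ap by (simp add: mult_left_mono)
  also have "\<dots> = hi - lo + int a" using e by (simp add: algebra_simps)
  also have "\<dots> \<le> k - i - 2 + int a" using \<open>lo > i\<close> \<open>hi < k\<close> by simp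
  finally show ?thesis using Z_def by simp
qed

lemma disj:
  fixes c i j :: nat and x :: int
  assumes c: "c \<ge> 1" and ij: "i < j"
    and xi: "x mod 2^(i+c) = (2^i - 1) mod 2^(i+c)"
    and xj: "x mod 2^(j+c) = (2^j - 1) mod 2^(j+c)"
  shows False
proof -
  have dv: "(2::int)^(i+c) dvd 2^(j+c)" using ij by (intro le_imp_power_dvd) simp
  have "x mod 2^(i+c) = (x mod 2^(j+c)) mod 2^(i+c)" using mod_mod_cancel[OF dv] by simp
  also have "\<dots> = ((2^j - 1) mod 2^(j+c)) mod (2::int)^(i+c)" using xj by simp
  also have "\<dots> = (2^j - 1) mod (2::int)^(i+c)" using mod_mod_cancel[OF dv] by simp
  finally have "(2^j - 1) mod (2::int)^(i+c) = (2^i - 1) mod 2^(i+c)" using xi by simp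
  then have d1: "(2::int)^(i+c) dvd (2^j - 1) - (2^i - 1)" by (simp only: mod_eq_dvd_iff)
  have pj: "(2::int)^j = 2^i * 2^(j-i)" using ij by (simp flip: power_add)
  have e: "(2::int)^j - 1 - (2^i - 1) = 2^i * (2^(j-i) - 1)" unfolding pj by (simp add: right_diff_distrib)
  have pc: "(2::int)^(i+c) = 2^i * 2^c" by (simp add: power_add)
  from d1 have "(2::int)^i * 2^c dvd 2^i * (2^(j-i) - 1)" unfolding e pc .
  then have d2: "(2::int)^c dvd 2^(j-i) - 1" using dvd_times_left_cancel_iff[of "(2::int)^i"] by simp
  have "(2::int) dvd 2^c" using c by (simp add: dvd_power)
  then have d3: "(2::int) dvd 2^(j-i) - 1" using d2 by (rule dvd_trans)
  have d4: "(2::int) dvd 2^(j-i)" using ij by (simp add: dvd_power)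
  have "(2::int) dvd 2^(j-i) - (2^(j-i) - 1)" by (rule dvd_diff[OF d4 d3])
  then show False by simp
qed
lemma series_bound:
  fixes a :: "nat \<Rightarrow> nat" and s :: "nat \<Rightarrow> int" and i k :: int
  assumes fill: "is_filling a s n" and qs: "q_series (prod_val a s {..<n}) q i k"
    and apos: "0 < zero_density a n" and alt: "zero_density a n < 1"
  shows "real_of_int (k - i) < (real n + real q) / (1 - zero_density a n) + 1"
proof -
  define l where "l = prod_val a s {..<n}"
  define \<alpha> where "\<alpha> = zero_density a n"
  have ik: "i < k" and cO: "card {j. i < j \<and> j < k \<and> l j} = q"
    using qs unfolding q_series_def l_def by auto
  have a1: "a t \<ge> 1" if "t < n" for t using fill that unfolding is_filling_def by auto
  define C where "C t = {j. i < j \<and> j < k \<and> j mod int (a t) = s t mod int (a t)}" for t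
  define Os where "Os = {j. i < j \<and> j < k \<and> l j}"
  define Zs where "Zs = {j. i < j \<and> j < k \<and> \<not> l j}"
  have W: "{i<..<k} = Os \<union> Zs" unfolding Os_def Zs_def by auto
  have finO: "finite Os" unfolding Os_def by (rule finite_subset[of _ "{i<..<k}"]) auto
  have finZ: "finite Zs" unfolding Zs_def by (rule finite_subset[of _ "{i<..<k}"]) auto
  have "card {i<..<k} = card Os + card Zs"
    unfolding W by (rule card_Un_disjoint[OF finO finZ]) (auto simp: Os_def Zs_def)
  then have e1: "real_of_int (k - i - 1) = real q + real (card Zs)"
    using ik cO Os_def by simp
  have "Zs \<subseteq> (\<Union>t\<in>{..<n}. C t)"
    unfolding Zs_def C_def l_def prod_val_def grid_val_def by auto
  then have "card Zs \<le> card (\<Union>t\<in>{..<n}. C t)"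
  proof (rule card_mono[rotated])
    have "(\<Union>t\<in>{..<n}. C t) \<subseteq> {i<..<k}" unfolding C_def by auto
    then show "finite (\<Union>t\<in>{..<n}. C t)" by (rule finite_subset) simp
  qed
  also have "\<dots> \<le> (\<Sum>t<n. card (C t))" by (rule card_UN_le) simp
  finally have "real (card Zs) \<le> (\<Sum>t<n. real (card (C t)))" by (simp flip: of_nat_sum)
  also have "\<dots> \<le> (\<Sum>t<n. real_of_int (k - i - 2) / real (a t) + 1)"
  proof (rule sum_mono)
    fix t assume "t \<in> {..<n}"
    then have at: "a t \<ge> 1" using a1 by simp
    have "int (a t) * int (card (C t)) \<le> k - i - 2 + int (a t)"
      unfolding C_def by (rule count_class[OF at ik])
    then have "real (a t) * real (card (C t)) \<le> real_of_int (k - i - 2) + real (a t)"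
    proof -
      have "real_of_int (int (a t) * int (card (C t))) \<le> real_of_int (k - i - 2 + int (a t))"
        using \<open>int (a t) * int (card (C t)) \<le> k - i - 2 + int (a t)\<close> by (simp only: of_int_le_iff)
      then show ?thesis by simp
    qed
    then show "real (card (C t)) \<le> real_of_int (k - i - 2) / real (a t) + 1"
      using at by (simp add: field_simps)
  qed
  also have "\<dots> = real_of_int (k - i - 2) * \<alpha> + real n"
    unfolding \<alpha>_def zero_density_def by (simp add: sum.distrib sum_distrib_left)
  finally have "real_of_int (k - i - 1) \<le> real q + real_of_int (k - i - 2) * \<alpha> + real n"
    using e1 by linarith
  then have "(real_of_int (k - i) - 1) * (1 - \<alpha>) \<le> real n + real q - \<alpha>"
    by (simp add: algebra_simps)
  also have "\<dots> < real n + real q" using apos \<alpha>_def by simp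
  finally have "real_of_int (k - i) - 1 < (real n + real q) / (1 - \<alpha>)"
    using alt \<alpha>_def by (simp add: pos_less_divide_eq)
  then show ?thesis using \<alpha>_def by simp
qed

definition AA :: "nat \<Rightarrow> nat \<Rightarrow> nat" where "AA c i = 2^(i+c)"
definition KK :: "nat \<Rightarrow> int" where "KK i = 2^i - 1"

lemma zero_at:
  assumes c: "c \<ge> 1" and zt: "\<not> grid_val (AA c t) (KK t) x" and zu: "\<not> grid_val (AA c u) (KK u) x"
  shows "t = u"
proof (rule ccontr)
  assume "t \<noteq> u"
  then consider "t < u" | "u < t" by linarith
  then show False
  proof cases
    case 1 then show False using disj[OF c 1, of x] zt zu by (simp add: grid_val_def AA_def KK_def)
  next
    case 2 then show False using disj[OF c 2, of x] zt zu by (simp add: grid_val_def AA_def KK_def)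
  qed
qed

lemma sys_fill:
  assumes c: "c \<ge> 1"
  shows "is_filling (AA c) KK N"
  unfolding is_filling_def
proof (intro conjI allI impI)
  fix i assume "i < N" then show "AA c i \<ge> 1" by (simp add: AA_def)
next
  fix m assume m: "m < N"
  have "\<not> prod_val (AA c) KK {..<N} (KK m)" using m by (auto simp: prod_val_def grid_val_def)
  moreover have "prod_val (AA c) KK ({..<N} - {m}) (KK m)"
    unfolding prod_val_def
  proof
    fix t assume "t \<in> {..<N} - {m}"
    then have "t \<noteq> m" by simp
    moreover have "\<not> grid_val (AA c m) (KK m) (KK m)" by (simp add: grid_val_def)
    ultimately show "grid_val (AA c t) (KK t) (KK m)" using zero_at[OF c] by blast
  qed
  ultimately show "prod_val (AA c) KK ({..<N} - {m}) \<noteq> prod_val (AA c) KK {..<N}" by metis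
qed

lemma sys_ok:
  assumes c: "c \<ge> 1"
  shows "grid_system (AA c) KK \<and> no_multiple_zeroes (AA c)"
proof
  have "mono (AA c)" unfolding mono_def AA_def by (simp add: power_increasing)
  then show "grid_system (AA c) KK" unfolding grid_system_def using sys_fill[OF c]
    by (auto simp: AA_def)
next
  show "no_multiple_zeroes (AA c)" unfolding no_multiple_zeroes_def
  proof
    fix N
    have "zero_mult (AA c) KK N j \<le> 1" for j
      unfolding zero_mult_def
      by (subst One_nat_def, subst card_le_Suc0_iff_eq) (auto intro: zero_at[OF c])
    then show "\<exists>k'. is_filling (AA c) k' N \<and> (\<forall>j. zero_mult (AA c) k' N j \<le> 1)"
      using sys_fill[OF c] by blast
  qed
qed

definition SS :: "nat \<Rightarrow> int" where "SS i = int i"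

lemma big: "int m < 2^c \<Longrightarrow> int m < (2::int)^(t+c)"
  by (smt (verit) le_add2 power_increasing)

lemma lval:
  assumes b: "n + q < (2::nat)^c" and j1: "-1 \<le> j" and j2: "j \<le> int (n+q)"
  shows "prod_val (AA c) SS {..<n} j \<longleftrightarrow> (j = -1 \<or> j \<ge> int n)"
proof -
  have bi: "int (n+q) < 2^c" using b by (metis of_nat_less_iff of_nat_numeral of_nat_power)
  have g: "grid_val (AA c t) (SS t) j \<longleftrightarrow> (j = -1 \<or> j \<noteq> int t)" if t: "t < n" for t
  proof -
    have M: "int (n+q) < (2::int)^(t+c)" using big[OF bi] .
    have "int t < int (n+q)" using t by (subst of_nat_less_iff) simp
    then have tlt: "int t < 2^(t+c)" using M by (rule less_trans)
    have tm: "int t mod 2^(t+c) = int t" using tlt by (intro mod_pos_pos_trivial) auto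
    show ?thesis
    proof (cases "j = -1")
      case True
      have "(-1::int) mod 2^(t+c) = 2^(t+c) - 1" by (simp add: zmod_minus1)
      then show ?thesis using True tm M t by (simp add: grid_val_def AA_def SS_def)
    next
      case False
      then have "j \<ge> 0" using j1 by simp
      then have "j mod 2^(t+c) = j" using M j2 by (intro mod_pos_pos_trivial) auto
      then show ?thesis using False tm by (simp add: grid_val_def AA_def SS_def)
    qed
  qed
  show ?thesis
  proof (cases "j = -1")
    case True then show ?thesis unfolding prod_val_def using g by simp
  next
    case False
    then have j0: "j \<ge> 0" using j1 by simp
    have "(\<forall>t\<in>{..<n}. grid_val (AA c t) (SS t) j) \<longleftrightarrow> (\<forall>t<n. j \<noteq> int t)"
      using g False by auto
    also have "\<dots> \<longleftrightarrow> j \<ge> int n"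
    proof
      assume h: "\<forall>t<n. j \<noteq> int t"
      show "j \<ge> int n"
      proof (rule ccontr)
        assume "\<not> j \<ge> int n"
        then have "nat j < n" using j0 by linarith
        then have "j \<noteq> int (nat j)" using h by blast
        then show False using j0 by simp
      qed
    next
      assume "j \<ge> int n" then show "\<forall>t<n. j \<noteq> int t" by auto
    qed
    finally show ?thesis unfolding prod_val_def using False by simp
  qed
qed

lemma witness:
  assumes b: "n + q < (2::nat)^c"
  shows "is_filling (AA c) SS n \<and> q_series (prod_val (AA c) SS {..<n}) q (-1) (int (n+q))"
proof
  have bi: "int (n+q) < 2^c" using b by (metis of_nat_less_iff of_nat_numeral of_nat_power)
  show "is_filling (AA c) SS n" unfolding is_filling_def
  proof (intro conjI allI impI)
    fix i show "i < n \<Longrightarrow> AA c i \<ge> 1" by (simp add: AA_def)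
  next
    fix m assume m: "m < n"
    have "\<not> grid_val (AA c m) (SS m) (int m)" by (simp add: grid_val_def SS_def)
    then have "\<not> prod_val (AA c) SS {..<n} (int m)" using m unfolding prod_val_def by blast
    moreover have "prod_val (AA c) SS ({..<n} - {m}) (int m)"
      unfolding prod_val_def
    proof
      fix t assume t: "t \<in> {..<n} - {m}"
      have M1: "int (n+q) < (2::int)^(t+c)" using big[OF bi] .
      have t1: "int t < int (n+q)" using t by (subst of_nat_less_iff) simp
      have m1: "int m < int (n+q)" using m by (subst of_nat_less_iff) simp
      have "int t < 2^(t+c)" using t1 M1 by (rule less_trans)
      moreover have "int m < 2^(t+c)" using m1 M1 by (rule less_trans)
      ultimately have "int t < 2^(t+c)" "int m < 2^(t+c)" by auto
      then have "int t mod 2^(t+c) = int t" "int m mod 2^(t+c) = int m"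
        by (auto intro: mod_pos_pos_trivial)
      then show "grid_val (AA c t) (SS t) (int m)" using t
        by (simp add: grid_val_def AA_def SS_def)
    qed
    ultimately show "prod_val (AA c) SS ({..<n} - {m}) \<noteq> prod_val (AA c) SS {..<n}" by metis
  qed
next
  define l where "l = prod_val (AA c) SS {..<n}"
  have "{j. -1 < j \<and> j < int (n+q) \<and> l j} = {int n..<int (n+q)}"
  proof (rule set_eqI)
    fix j :: int
    show "j \<in> {j. -1 < j \<and> j < int (n+q) \<and> l j} \<longleftrightarrow> j \<in> {int n..<int (n+q)}"
    proof (cases "-1 < j \<and> j < int (n+q)")
      case True
      then have "l j \<longleftrightarrow> (j = -1 \<or> j \<ge> int n)" unfolding l_def by (intro lval[OF b]) auto
      then show ?thesis using True by auto
    next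
      case False
      then show ?thesis by auto
    qed
  qed
  then have "card {j. -1 < j \<and> j < int (n+q) \<and> l j} = q" by simp
  moreover have "l (-1)" "l (int (n+q))" using lval[OF b] unfolding l_def by auto
  ultimately show "q_series (prod_val (AA c) SS {..<n}) q (-1) (int (n+q))"
    unfolding q_series_def l_def by simp
qed

theorem theorem3:
  fixes n q :: nat
  assumes "n \<ge> 1"
  shows "(\<forall>a k. grid_system a k \<and> no_multiple_zeroes a \<and>
            0 < zero_density a n \<and> zero_density a n < 1 \<longrightarrow>
            msr a n q < ereal ((real n + real q) / (1 - zero_density a n) + 1))
       \<and> (\<forall>\<epsilon>>0. \<exists>a k. grid_system a k \<and> no_multiple_zeroes a \<and>
            0 < zero_density a n \<and> zero_density a n < 1 \<and>
            msr a n q > ereal ((real n + real q) / (1 - zero_density a n) + 1 - \<epsilon>))"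
  proof (intro conjI allI impI)
  fix a :: "nat \<Rightarrow> nat" and k :: "nat \<Rightarrow> int"
  assume H: "grid_system a k \<and> no_multiple_zeroes a \<and> 0 < zero_density a n \<and> zero_density a n < 1"
  define B where "B = (real n + real q) / (1 - zero_density a n) + 1"
  have "msr a n q \<le> ereal (real_of_int (\<lceil>B\<rceil> - 1))"
    unfolding msr_def
  proof (rule SUP_least)
    fix p assume "p \<in> {(s, i, k). is_filling a s n \<and> q_series (prod_val a s {..<n}) q i k}"
    then obtain s i kk where p: "p = (s, i, kk)" "is_filling a s n" "q_series (prod_val a s {..<n}) q i kk"
      by auto
    have "real_of_int (kk - i) < B" unfolding B_def using series_bound[OF p(2) p(3)] H by simp
    then have "kk - i < \<lceil>B\<rceil>" by (simp only: less_ceiling_iff)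
    then have "kk - i \<le> \<lceil>B\<rceil> - 1" by simp
    then show "ereal (real_of_int (snd (snd p) - fst (snd p))) \<le> ereal (real_of_int (\<lceil>B\<rceil> - 1))"
      using p(1) by simp
  qed
  also have "\<dots> < ereal B"
  proof -
    have "\<lceil>B\<rceil> - 1 < \<lceil>B\<rceil>" by simp
    then have "real_of_int (\<lceil>B\<rceil> - 1) < B" by (simp only: less_ceiling_iff)
    then show ?thesis by simp
  qed
  finally show "msr a n q < ereal ((real n + real q) / (1 - zero_density a n) + 1)"
    unfolding B_def .
next
  fix \<epsilon> :: real assume ep: "\<epsilon> > 0"
  define u where "u = real n + real q"
  define y where "y = max (u + 1) (max (2 * real n) (2 * u * real n / \<epsilon>))"
  obtain c0 where c0: "y < (2::real)^c0" using real_arch_pow[of 2 y] by auto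
  define c where "c = Suc c0"
  define D where "D = (2::real)^c"
  have c1: "c \<ge> 1" unfolding c_def by simp
  have "(2::real)^c0 > 0" by simp
  moreover have "D = 2 * 2^c0" by (simp add: D_def c_def)
  ultimately have Dy: "y < D" using c0 by linarith
  have Dpos: "D > 0" unfolding D_def by simp
  have Du: "u + 1 < D" and Dn: "2 * real n < D" and Dq: "2 * u * real n / \<epsilon> < D"
    using Dy unfolding y_def by auto
  have "real (n + q) < real (2^c)" using Du unfolding u_def D_def by simp
  then have b: "n + q < 2^c" by (simp only: of_nat_less_iff)
  define \<alpha> where "\<alpha> = zero_density (AA c) n"
  have \<alpha>eq: "\<alpha> = (\<Sum>i<n. 1 / (2::real)^(i+c))" unfolding \<alpha>_def zero_density_def AA_def by simp
  have apos: "\<alpha> > 0" unfolding \<alpha>eq using assms by (intro sum_pos) (auto simp: lessThan_empty_iff)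
  have "\<alpha> \<le> (\<Sum>i<n. 1 / D)" unfolding \<alpha>eq D_def
  proof (rule sum_mono)
    fix i assume "i \<in> {..<n}"
    have "(2::real)^c \<le> 2^(i+c)" by (rule power_increasing) auto
    then show "1 / (2::real)^(i+c) \<le> 1 / 2^c" by (intro divide_left_mono) auto
  qed
  then have aD: "\<alpha> * D \<le> real n" using Dpos by (simp add: field_simps)
  have alt: "\<alpha> < 1"
  proof -
    have "\<alpha> * D < D" using aD Dn by linarith
    then show ?thesis using Dpos by simp
  qed
  have h1: "2 * u * real n < \<epsilon> * D" using Dq ep by (simp add: pos_divide_less_eq mult.commute)
  have h2: "2 * real n * \<epsilon> < D * \<epsilon>" using Dn ep by simp
  have u0: "u \<ge> 0" unfolding u_def by simp
  have "\<alpha> * (u + \<epsilon>) * D = (\<alpha> * D) * (u + \<epsilon>)" by (simp add: algebra_simps)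
  also have "\<dots> \<le> real n * (u + \<epsilon>)" using aD u0 ep by (intro mult_right_mono) auto
  also have "\<dots> < \<epsilon> * D" using h1 h2 by (simp add: algebra_simps)
  finally have "\<alpha> * (u + \<epsilon>) < \<epsilon>" using Dpos by simp
  then have "u < (u + \<epsilon>) * (1 - \<alpha>)" by (simp add: algebra_simps)
  then have key: "u / (1 - \<alpha>) < u + \<epsilon>" using alt by (simp add: pos_divide_less_eq)
  have w: "is_filling (AA c) SS n \<and> q_series (prod_val (AA c) SS {..<n}) q (-1) (int (n+q))"
    by (rule witness[OF b])
  have "ereal (real_of_int (int (n+q) - (-1))) \<le> msr (AA c) n q"
    unfolding msr_def
  proof (rule SUP_upper2)
    show "(SS, -1, int (n+q)) \<in> {(s, i, k). is_filling (AA c) s n \<and> q_series (prod_val (AA c) s {..<n}) q i k}"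
      using w by simp
  qed simp
  moreover have "real_of_int (int (n+q) - (-1)) = u + 1" unfolding u_def by simp
  ultimately have m: "ereal (u + 1) \<le> msr (AA c) n q" by simp
  have "ereal ((real n + real q) / (1 - zero_density (AA c) n) + 1 - \<epsilon>) < ereal (u + 1)"
    using key unfolding u_def \<alpha>_def by simp
  then have "msr (AA c) n q > ereal ((real n + real q) / (1 - zero_density (AA c) n) + 1 - \<epsilon>)"
    using m by (rule less_le_trans)
  then show "\<exists>a k. grid_system a k \<and> no_multiple_zeroes a \<and>
            0 < zero_density a n \<and> zero_density a n < 1 \<and>
            msr a n q > ereal ((real n + real q) / (1 - zero_density a n) + 1 - \<epsilon>)"
    using sys_ok[OF c1] apos alt unfolding \<alpha>_def by blast
qed

end
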